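(* Under the standing assumptions, for $0\le i\le d$ we have, as subspaces of $V$: (i) $E_iV+E_{i+1}V+\cdots+E_dV=U_i+U_{i+1}+\cdots+U_d$; (ii) $E^*_0V+E^*_1V+\cdots+E^*_iV=U_0+U_1+\cdots+U_i$.
   Context: Let $\mathbb F$ be an algebraically closed field, $d\ge0$, and $q,a,b,c,a^*,b^*,c^*\in\mathbb F$ with $q,b,c,b^*,c^*$ nonzero and $q^2\ne\pm1$. Put $\theta_i=a+bq^{2i-d}+cq^{d-2i}$ and $\theta^*_i=a^*+b^*q^{2i-d}+c^*q^{d-2i}$ ($0\le i\le d$), and assume $\theta_0,\dots,\theta_d$ are mutually distinct and $\theta^*_0,\dots,\theta^*_d$ are mutually distinct (this forces $q^{2i}\ne1$ for $1\le i\le d$). $U_q(\widehat{\mathfrak{sl}}_2)$ is the associative unital $\mathbb F$-algebra with generators $e_i^{\pm},K_i^{\pm1}$ ($i\in\{0,1\}$) and relations $K_iK_i^{-1}=K_i^{-1}K_i=1$, $K_0K_1=K_1K_0$, $K_ie_i^{\pm}K_i^{-1}=q^{\pm2}e_i^{\pm}$, $K_ie_j^{\pm}K_i^{-1}=q^{\mp2}e_j^{\pm}$ ($i\ne j$), $e_i^+e_i^--e_i^-e_i^+=(K_i-K_i^{-1})/(q-q^{-1})$, $e_0^{\pm}e_1^{\mp}=e_1^{\mp}e_0^{\pm}$, and the $q$-Serre relations $(e_i^\pm)^3e_j^\pm-[3]_q(e_i^\pm)^2e_j^\pm e_i^\pm+[3]_qe_i^\pm e_j^\pm(e_i^\pm)^2-e_j^\pm(e_i^\pm)^3=0$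 ($i\ne j$), where $[3]_q=q^2+1+q^{-2}$. Tensor products of modules are formed via $e_i^+(v\otimes w)=e_i^+v\otimes K_iw+v\otimes e_i^+w$, $e_i^-(v\otimes w)=e_i^-v\otimes w+K_i^{-1}v\otimes e_i^-w$, $K_i(v\otimes w)=K_iv\otimes K_iw$. For nonzero $\alpha\in\mathbb F$, $V(\alpha)$ is the module with basis $x,y$ and $K_1x=qx$, $K_1y=q^{-1}y$, $e_1^-x=y$, $e_1^-y=0$, $e_1^+x=0$, $e_1^+y=x$, $K_0x=q^{-1}x$, $K_0y=qy$, $e_0^-x=0$, $e_0^-y=q\alpha^{-1}x$, $e_0^+x=q^{-1}\alpha y$, $e_0^+y=0$. $V=V(\alpha_1)\otimes\cdots\otimes V(\alpha_d)$ with nonzero $\alpha_i\in\mathbb F$ (for $d=0$, the trivial module where each $e_i^\pm$ acts as $0$ and each $K_i^{\pm1}$ as $1$). For $0\le i\le d$, $U_i\subseteq V$ is the span of the basis vectors $v_1\otimes\cdots\otimes v_d$ ($v_k\in\{x,y\}$) with exactly $i$ factors equal to $y$. Fix $u,v,u^*,v^*\in\mathbb F$ with $uv^*=-bb^*q^{-1}(q-q^{-1})^2$, $vu^*=-cc^*q^{-1}(q-q^{-1})^2$; set $R=ue_0^++ve_1^-K_1$, $L=u^*e_1^++v^*e_0^-K_0$, $A=a1+bK_0+cK_1+R$, $A^*=a^*1+b^*K_0+c^*K_1+L$, and $E_i=\prod_{0\le j\le d,\,j\ne i}(A-\theta_j1)/(\theta_i-\theta_j)$, $E^*_i=\prod_{0\le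 j\le d,\,j\ne i}(A^*-\theta^*_j1)/(\theta^*_i-\theta^*_j)$ in $U_q(\widehat{\mathfrak{sl}}_2)$. *)

theory Defs
  imports Main "HOL-Computational_Algebra.Polynomial"
begin

definition alg_closed :: "'a::field itself \<Rightarrow> bool" where
  "alg_closed _ \<longleftrightarrow> (\<forall>p::'a poly. degree p > 0 \<longrightarrow> (\<exists>x. poly p x = 0))"

text \<open>Vectors of V = V(alpha_1) ox ... ox V(alpha_d): coefficient functions on the
  standard basis v_1 ox ... ox v_d, encoded as a bool list of length d
  (False = x, True = y).  Matrices: M t s = coefficient of basis vector t in the
  image of basis vector s.\<close>

definition Vsp :: "nat \<Rightarrow> (bool list \<Rightarrow> 'a::field) set" where
  "Vsp n = {w. \<forall>s. length s \<noteq> n \<longrightarrow> w s = 0}"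

definition act :: "nat \<Rightarrow> (bool list \<Rightarrow> bool list \<Rightarrow> 'a::field) \<Rightarrow> (bool list \<Rightarrow> 'a) \<Rightarrow> (bool list \<Rightarrow> 'a)" where
  "act n M w = (\<lambda>t. if length t = n then (\<Sum>s\<in>{s. length s = n}. M t s * w s) else 0)"

definition Kval :: "'a::field \<Rightarrow> nat \<Rightarrow> bool \<Rightarrow> 'a" where
  "Kval q i bt = (if i = 1 then (if bt then inverse q else q)
                  else (if bt then q else inverse q))"

text \<open>e_i^+ on V(alpha): e_1^+ y = x, e_0^+ x = q^{-1} alpha y (target, source).\<close>
definition ep1 :: "'a::field \<Rightarrow> nat \<Rightarrow> 'a \<Rightarrow> bool \<Rightarrow> bool \<Rightarrow> 'a" where
  "ep1 q i al tb sb = (if i = 1 then (if \<not> tb \<and> sb then 1 else 0)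
                       else (if tb \<and> \<not> sb then al / q else 0))"

text \<open>e_i^- on V(alpha): e_1^- x = y, e_0^- y = q alpha^{-1} x.\<close>
definition em1 :: "'a::field \<Rightarrow> nat \<Rightarrow> 'a \<Rightarrow> bool \<Rightarrow> bool \<Rightarrow> 'a" where
  "em1 q i al tb sb = (if i = 1 then (if tb \<and> \<not> sb then 1 else 0)
                       else (if \<not> tb \<and> sb then q / al else 0))"

text \<open>Matrices on V(alpha_1) ox (V(alpha_2) ox ... ), via the coproduct
  Delta(K) = K ox K, Delta(e^+) = e^+ ox K + 1 ox e^+, Delta(e^-) = e^- ox 1 + K^{-1} ox e^-.\<close>
fun tId :: "'a::field list \<Rightarrow> bool list \<Rightarrow> bool list \<Rightarrow> 'a" where
  "tId as t s = (if t = s \<and> length s = length as then 1 else 0)"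

fun tK :: "'a::field \<Rightarrow> nat \<Rightarrow> 'a list \<Rightarrow> bool list \<Rightarrow> bool list \<Rightarrow> 'a" where
  "tK q i [] [] [] = 1"
| "tK q i (al # as) (tb # t) (sb # s) = (if tb = sb then Kval q i tb * tK q i as t s else 0)"
| "tK q i _ _ _ = 0"

fun tEp :: "'a::field \<Rightarrow> nat \<Rightarrow> 'a list \<Rightarrow> bool list \<Rightarrow> bool list \<Rightarrow> 'a" where
  "tEp q i [] [] [] = 0"
| "tEp q i (al # as) (tb # t) (sb # s) =
     ep1 q i al tb sb * tK q i as t s + (if tb = sb then tEp q i as t s else 0)"
| "tEp q i _ _ _ = 0"

fun tEm :: "'a::field \<Rightarrow> nat \<Rightarrow> 'a list \<Rightarrow> bool list \<Rightarrow> bool list \<Rightarrow> 'a" where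
  "tEm q i [] [] [] = 0"
| "tEm q i (al # as) (tb # t) (sb # s) =
     em1 q i al tb sb * tId as t s + (if tb = sb then inverse (Kval q i tb) * tEm q i as t s else 0)"
| "tEm q i _ _ _ = 0"

definition K_op where "K_op q i as = act (length as) (tK q i as)"
definition ep_op where "ep_op q i as = act (length as) (tEp q i as)"
definition em_op where "em_op q i as = act (length as) (tEm q i as)"

definition A_op :: "'a::field \<Rightarrow> 'a list \<Rightarrow> 'a \<Rightarrow> 'a \<Rightarrow> 'a \<Rightarrow> 'a \<Rightarrow> 'a \<Rightarrow> (bool list \<Rightarrow> 'a) \<Rightarrow> (bool list \<Rightarrow> 'a)" where
  "A_op q as a b c u v w = (\<lambda>t. a * w t + b * K_op q 0 as w t + c * K_op q 1 as w t
      + u * ep_op q 0 as w t + v * em_op q 1 as (K_op q 1 as w) t)"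

definition As_op :: "'a::field \<Rightarrow> 'a list \<Rightarrow> 'a \<Rightarrow> 'a \<Rightarrow> 'a \<Rightarrow> 'a \<Rightarrow> 'a \<Rightarrow> (bool list \<Rightarrow> 'a) \<Rightarrow> (bool list \<Rightarrow> 'a)" where
  "As_op q as a b c u v w = (\<lambda>t. a * w t + b * K_op q 0 as w t + c * K_op q 1 as w t
      + u * ep_op q 1 as w t + v * em_op q 0 as (K_op q 0 as w) t)"

definition theta :: "'a::field \<Rightarrow> nat \<Rightarrow> 'a \<Rightarrow> 'a \<Rightarrow> 'a \<Rightarrow> nat \<Rightarrow> 'a" where
  "theta q d a b c i = a + b * q powi (2 * int i - int d) + c * q powi (int d - 2 * int i)"

text \<open>Primitive idempotent E_i = prod_{j \<noteq> i} (X - th_j)/(th_i - th_j) evaluated at the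
  operator X on V (the product is taken in increasing order of j).\<close>
definition idem_op :: "((bool list \<Rightarrow> 'a::field) \<Rightarrow> (bool list \<Rightarrow> 'a)) \<Rightarrow> (nat \<Rightarrow> 'a) \<Rightarrow> nat \<Rightarrow> nat
     \<Rightarrow> (bool list \<Rightarrow> 'a) \<Rightarrow> (bool list \<Rightarrow> 'a)" where
  "idem_op X th d i = foldr (\<lambda>j f. (\<lambda>w. (\<lambda>t. (X w t - th j * w t) / (th i - th j))) \<circ> f)
                        (filter (\<lambda>j. j \<noteq> i) [0..<Suc d]) id"

definition Usp :: "nat \<Rightarrow> nat \<Rightarrow> (bool list \<Rightarrow> 'a::field) set" where
  "Usp n k = {w \<in> Vsp n. \<forall>s. w s \<noteq> 0 \<longrightarrow> count_list s True = k}"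

definition ssum :: "(nat \<Rightarrow> (bool list \<Rightarrow> 'a::field) set) \<Rightarrow> nat set \<Rightarrow> (bool list \<Rightarrow> 'a) set" where
  "ssum W I = {(\<lambda>t. \<Sum>k\<in>I. x k t) | x. \<forall>k\<in>I. x k \<in> W k}"

end

theory Submission
  imports Defs "HOL-Library.Multiset"
begin

definition gfun :: "((bool list \<Rightarrow> 'a::field) \<Rightarrow> (bool list \<Rightarrow> 'a)) \<Rightarrow> (nat \<Rightarrow> 'a) \<Rightarrow> nat \<Rightarrow> nat
   \<Rightarrow> (bool list \<Rightarrow> 'a) \<Rightarrow> (bool list \<Rightarrow> 'a)" where
  "gfun X th k j = (\<lambda>w. (\<lambda>t. (X w t - th j * w t) / (th k - th j)))"

definition FL where "FL X th k L = foldr (\<lambda>j f. gfun X th k j \<circ> f) L id"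

lemma idem_FL: "idem_op X th d k = FL X th k (filter (\<lambda>j. j \<noteq> k) [0..<Suc d])"
  unfolding idem_op_def FL_def gfun_def by simp

lemma FL_Cons: "FL X th k (j # L) = gfun X th k j \<circ> FL X th k L"
  unfolding FL_def by simp

lemma foldr_gen: "foldr (\<lambda>j f. gfun X th k j \<circ> f) A c = FL X th k A \<circ> c"
  unfolding FL_def by (induction A) auto

lemma FL_append: "FL X th k (A @ B) = FL X th k A \<circ> FL X th k B"
proof -
  have "FL X th k (A @ B) = foldr (\<lambda>j f. gfun X th k j \<circ> f) A (FL X th k B)" by (simp add: FL_def)
  then show ?thesis by (simp only: foldr_gen)
qed

locale flagsys =
  fixes X :: "(bool list \<Rightarrow> 'a::field) \<Rightarrow> (bool list \<Rightarrow> 'a)" and th :: "nat \<Rightarrow> 'a" and d :: nat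
    and W :: "nat \<Rightarrow> (bool list \<Rightarrow> 'a) set" and \<sigma> :: "nat \<Rightarrow> nat"
  assumes lin: "\<And>f h \<alpha> \<beta>. X (\<lambda>t. \<alpha> * f t + \<beta> * h t) = (\<lambda>t. \<alpha> * X f t + \<beta> * X h t)"
    and sub: "\<And>m f h \<alpha> \<beta>. f \<in> W m \<Longrightarrow> h \<in> W m \<Longrightarrow> (\<lambda>t. \<alpha> * f t + \<beta> * h t) \<in> W m"
    and zero: "\<And>m. (\<lambda>t. 0) \<in> W m"
    and anti: "\<And>m m'. m \<le> m' \<Longrightarrow> W m' \<subseteq> W m"
    and top: "W (Suc d) \<subseteq> {\<lambda>t. 0}"
    and key: "\<And>m w. m \<le> d \<Longrightarrow> w \<in> W m \<Longrightarrow> (\<lambda>t. X w t - th (\<sigma> m) * w t) \<in> W (Suc m)"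
    and bij: "bij_betw \<sigma> {0..d} {0..d}"
    and inj: "inj_on th {0..d}"
begin

lemma g_comm:
  shows "gfun X th k j \<circ> gfun X th k l = gfun X th k l \<circ> gfun X th k j"
proof -
  have e: "\<And>l v. gfun X th k l v = (\<lambda>t. inverse (th k - th l) * X v t + (- th l * inverse (th k - th l)) * v t)"
    unfolding gfun_def by (auto simp: divide_inverse algebra_simps)
  show ?thesis
    by (rule ext, simp only: comp_def e lin) (simp add: algebra_simps)
qed

lemma F_comm:
  shows "gfun X th k x \<circ> FL X th k L = FL X th k L \<circ> gfun X th k x"
proof (induction L)
  case Nil then show ?case by (simp add: FL_def)
next
  case (Cons y L)
  have "gfun X th k x \<circ> FL X th k (y # L) = (gfun X th k x \<circ> gfun X th k y) \<circ> FL X th k L"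
    by (simp add: FL_Cons comp_assoc)
  also have "\<dots> = gfun X th k y \<circ> (gfun X th k x \<circ> FL X th k L)"
    by (metis (no_types) comp_assoc g_comm)
  also have "\<dots> = FL X th k (y # L) \<circ> gfun X th k x"
    by (simp only: Cons.IH FL_Cons comp_assoc)
  finally show ?case .
qed

lemma FL_perm:
  shows "mset L1 = mset L2 \<Longrightarrow> FL X th k L1 = FL X th k L2"
proof (induction L1 arbitrary: L2)
  case Nil then show ?case by simp
next
  case (Cons x L1)
  have "x \<in> set L2" using Cons.prems by (metis list.set_intros(1) set_mset_mset)
  then obtain A B where L2: "L2 = A @ x # B" by (meson split_list)
  have m: "mset L1 = mset (A @ B)" using Cons.prems L2 by simp
  have "FL X th k L2 = FL X th k A \<circ> (gfun X th k x \<circ> FL X th k B)"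
    by (simp add: L2 FL_append FL_Cons)
  also have "\<dots> = gfun X th k x \<circ> (FL X th k A \<circ> FL X th k B)"
    by (simp only: comp_assoc[symmetric] F_comm[of k x A])
  also have "\<dots> = FL X th k (x # L1)"
    by (simp only: Cons.IH[OF m] FL_append FL_Cons)
  finally show ?case by simp
qed

lemma W_add: "f \<in> W m \<Longrightarrow> h \<in> W m \<Longrightarrow> (\<lambda>t. f t + h t) \<in> W m"
  using sub[of f m h 1 1] by simp

lemma W_smult: "f \<in> W m \<Longrightarrow> (\<lambda>t. \<alpha> * f t) \<in> W m"
  using sub[of f m f \<alpha> 0] by simp

lemma W_Suc: "f \<in> W (Suc m) \<Longrightarrow> f \<in> W m"
  using anti[of m "Suc m"] by auto

lemma sig_le: "m \<le> d \<Longrightarrow> \<sigma> m \<le> d"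
  using bij by (auto simp: bij_betw_def)

lemma sig_inj: "m \<le> d \<Longrightarrow> n \<le> d \<Longrightarrow> \<sigma> m = \<sigma> n \<Longrightarrow> m = n"
  using bij by (auto simp: bij_betw_def inj_on_def)

lemma th_ne: "j \<le> d \<Longrightarrow> k \<le> d \<Longrightarrow> j \<noteq> k \<Longrightarrow> th k - th j \<noteq> 0"
  using inj by (auto simp: inj_on_def)

lemma g_mod:
  assumes "i \<le> d" "w \<in> W i" "j \<le> d" "j \<noteq> \<sigma> i"
  shows "(\<lambda>t. gfun X th (\<sigma> i) j w t - w t) \<in> W (Suc i)"
proof -
  have c: "th (\<sigma> i) - th j \<noteq> 0" using th_ne assms sig_le by auto
  have "(\<lambda>t. gfun X th (\<sigma> i) j w t - w t) = (\<lambda>t. inverse (th (\<sigma> i) - th j) * (X w t - th (\<sigma> i) * w t))"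
    unfolding gfun_def using c by (auto simp: field_simps)
  then show ?thesis using W_smult key assms by simp
qed

lemma FL_mod:
  assumes "i \<le> d" "w \<in> W i"
  shows "set L \<subseteq> {0..d} \<Longrightarrow> \<sigma> i \<notin> set L \<Longrightarrow>
     FL X th (\<sigma> i) L w \<in> W i \<and> (\<lambda>t. FL X th (\<sigma> i) L w t - w t) \<in> W (Suc i)"
proof (induction L)
  case Nil then show ?case using assms by (simp add: FL_def zero)
next
  case (Cons j L)
  let ?v = "FL X th (\<sigma> i) L w"
  have v: "?v \<in> W i" "(\<lambda>t. ?v t - w t) \<in> W (Suc i)" using Cons by auto
  have g: "(\<lambda>t. gfun X th (\<sigma> i) j ?v t - ?v t) \<in> W (Suc i)"
    using g_mod[OF assms(1) v(1)] Cons.prems by auto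
  have "(\<lambda>t. ?v t + (gfun X th (\<sigma> i) j ?v t - ?v t)) \<in> W i"
    using W_add[OF v(1) W_Suc[OF g]] .
  moreover have "(\<lambda>t. (gfun X th (\<sigma> i) j ?v t - ?v t) + (?v t - w t)) \<in> W (Suc i)"
    using W_add[OF g v(2)] .
  ultimately show ?case by (simp add: FL_Cons)
qed

lemma g_keep:
  assumes "m \<le> d" "w \<in> W m"
  shows "gfun X th k j w \<in> W m"
proof -
  have "gfun X th k j w = (\<lambda>t. inverse (th k - th j) * (X w t - th (\<sigma> m) * w t)
          + (inverse (th k - th j) * (th (\<sigma> m) - th j)) * w t)"
    unfolding gfun_def by (auto simp: divide_inverse algebra_simps)
  moreover have "(\<lambda>t. X w t - th (\<sigma> m) * w t) \<in> W m" using key[OF assms] W_Suc by blast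
  ultimately show ?thesis using sub assms(2) by simp
qed

lemma g_step:
  assumes "m \<le> d" "w \<in> W m"
  shows "gfun X th k (\<sigma> m) w \<in> W (Suc m)"
proof -
  have "gfun X th k (\<sigma> m) w = (\<lambda>t. inverse (th k - th (\<sigma> m)) * (X w t - th (\<sigma> m) * w t))"
    unfolding gfun_def by (auto simp: divide_inverse algebra_simps)
  then show ?thesis using key[OF assms] W_smult by simp
qed

lemma FL_up:
  assumes "k \<le> d" "v \<in> W 0"
  shows "n \<le> Suc d \<Longrightarrow> FL X th (\<sigma> k) (filter (\<lambda>j. j \<noteq> \<sigma> k) (rev (map \<sigma> [0..<n]))) v \<in> W (min n k)"
proof (induction n)
  case 0 then show ?case using assms by (simp add: FL_def)
next
  case (Suc n)
  let ?F = "FL X th (\<sigma> k) (filter (\<lambda>j. j \<noteq> \<sigma> k) (rev (map \<sigma> [0..<n]))) v"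
  have IH: "?F \<in> W (min n k)" using Suc by simp
  have nd: "n \<le> d" using Suc.prems by simp
  show ?case
  proof (cases "n = k")
    case True then show ?thesis using IH by simp
  next
    case False
    then have ne: "\<sigma> n \<noteq> \<sigma> k" using sig_inj nd assms(1) by blast
    have eq: "FL X th (\<sigma> k) (filter (\<lambda>j. j \<noteq> \<sigma> k) (rev (map \<sigma> [0..<Suc n]))) v
            = gfun X th (\<sigma> k) (\<sigma> n) ?F" using ne by (simp add: FL_Cons)
    show ?thesis
    proof (cases "n < k")
      case True
      then show ?thesis unfolding eq using g_step[OF nd] IH by (simp add: min_def)
    next
      case False
      then show ?thesis unfolding eq using g_keep[OF assms(1)] IH \<open>n \<noteq> k\<close> by (simp add: min_def)
    qed
  qed
qed

lemma E_in:
  assumes "k \<le> d" "v \<in> W 0"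
  shows "idem_op X th d (\<sigma> k) v \<in> W k"
proof -
  have ss: "set [0..<Suc d] = {0..d}" by (simp only: set_upt atLeastLessThanSuc_atLeastAtMost)
  have inj': "inj_on \<sigma> (set [0..<Suc d])" using bij unfolding ss by (simp add: bij_betw_def)
  have st: "set (map \<sigma> [0..<Suc d]) = set [0..<Suc d]" using bij unfolding set_map ss
    by (simp add: bij_betw_def)
  have M: "mset (map \<sigma> [0..<Suc d]) = mset [0..<Suc d]"
    using set_eq_iff_mset_eq_distinct[of "map \<sigma> [0..<Suc d]" "[0..<Suc d]"] st inj'
    by (simp add: distinct_map)
  then have "mset (filter (\<lambda>j. j \<noteq> \<sigma> k) [0..<Suc d]) = mset (filter (\<lambda>j. j \<noteq> \<sigma> k) (rev (map \<sigma> [0..<Suc d])))"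
    by (simp only: mset_filter mset_rev M)
  then have "idem_op X th d (\<sigma> k) = FL X th (\<sigma> k) (filter (\<lambda>j. j \<noteq> \<sigma> k) (rev (map \<sigma> [0..<Suc d])))"
    unfolding idem_FL by (rule FL_perm)
  then show ?thesis using FL_up[OF assms, of "Suc d"] assms(1) by simp
qed

lemma W_sum: "finite I \<Longrightarrow> (\<forall>k\<in>I. x k \<in> W m) \<Longrightarrow> (\<lambda>t. \<Sum>k\<in>I. x k t) \<in> W m"
proof (induction I rule: finite_induct)
  case empty then show ?case using zero by simp
next
  case (insert a F) then show ?case using W_add[of "x a" m "\<lambda>t. \<Sum>k\<in>F. x k t"] by simp
qed

lemma main_sub:
  assumes "i \<le> Suc d"
  shows "ssum (\<lambda>k. idem_op X th d k ` W 0) (\<sigma> ` {i..d}) \<subseteq> W i"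
proof
  fix z assume "z \<in> ssum (\<lambda>k. idem_op X th d k ` W 0) (\<sigma> ` {i..d})"
  then obtain x where z: "z = (\<lambda>t. \<Sum>k\<in>\<sigma> ` {i..d}. x k t)"
    and x: "\<forall>k\<in>\<sigma> ` {i..d}. x k \<in> idem_op X th d k ` W 0" unfolding ssum_def by blast
  have "\<forall>k\<in>\<sigma> ` {i..d}. x k \<in> W i"
  proof
    fix k assume "k \<in> \<sigma> ` {i..d}"
    then obtain m where m: "m \<in> {i..d}" "k = \<sigma> m" by blast
    then obtain v where "v \<in> W 0" "x k = idem_op X th d (\<sigma> m) v" using x by blast
    then have "x k \<in> W m" using E_in m by simp
    then show "x k \<in> W i" using anti[of i m] m by auto
  qed
  then show "z \<in> W i" unfolding z by (intro W_sum) auto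
qed

lemma main_sup:
  assumes "i \<le> Suc d"
  shows "W i \<subseteq> ssum (\<lambda>k. idem_op X th d k ` W 0) (\<sigma> ` {i..d})"
  using assms
proof (induction i rule: inc_induct)
  case base
  show ?case
  proof
    fix w assume "w \<in> W (Suc d)"
    then have "w = (\<lambda>t. 0)" using top by auto
    then show "w \<in> ssum (\<lambda>k. idem_op X th d k ` W 0) (\<sigma> ` {Suc d..d})"
      unfolding ssum_def by auto
  qed
next
  case (step i)
  have id: "i \<le> d" using step by simp
  show ?case
  proof
    fix w assume w: "w \<in> W i"
    let ?e = "idem_op X th d (\<sigma> i) w"
    have "set (filter (\<lambda>j. j \<noteq> \<sigma> i) [0..<Suc d]) \<subseteq> {0..d}" by auto
    then have "(\<lambda>t. ?e t - w t) \<in> W (Suc i)"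
      using FL_mod[OF id w, of "filter (\<lambda>j. j \<noteq> \<sigma> i) [0..<Suc d]"] by (simp add: idem_FL)
    then have "(\<lambda>t. (-1) * (?e t - w t)) \<in> W (Suc i)" by (rule W_smult)
    then have "(\<lambda>t. w t - ?e t) \<in> W (Suc i)" by simp
    then obtain x where xs: "(\<lambda>t. w t - ?e t) = (\<lambda>t. \<Sum>k\<in>\<sigma> ` {Suc i..d}. x k t)"
      and x: "\<forall>k\<in>\<sigma> ` {Suc i..d}. x k \<in> idem_op X th d k ` W 0"
      using step.IH unfolding ssum_def by blast
    let ?x = "x(\<sigma> i := ?e)"
    have nin: "\<sigma> i \<notin> \<sigma> ` {Suc i..d}" using sig_inj id by fastforce
    have ins: "\<sigma> ` {i..d} = insert (\<sigma> i) (\<sigma> ` {Suc i..d})" using id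
      by (metis Icc_eq_insert_lb_nat image_insert)
    have "w0": "w \<in> W 0" using w anti[of 0 i] by auto
    have "\<forall>k\<in>\<sigma> ` {i..d}. ?x k \<in> idem_op X th d k ` W 0"
      using x w0 ins by auto
    moreover have "w = (\<lambda>t. \<Sum>k\<in>\<sigma> ` {i..d}. ?x k t)"
    proof
      fix t
      have "(\<Sum>k\<in>\<sigma> ` {i..d}. ?x k t) = ?e t + (\<Sum>k\<in>\<sigma> ` {Suc i..d}. ?x k t)"
        unfolding ins using nin by (simp add: sum.insert)
      also have "(\<Sum>k\<in>\<sigma> ` {Suc i..d}. ?x k t) = (\<Sum>k\<in>\<sigma> ` {Suc i..d}. x k t)"
      proof (rule sum.cong[OF refl])
        fix k assume "k \<in> \<sigma> ` {Suc i..d}"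
        then have "k \<noteq> \<sigma> i" using nin by blast
        then show "?x k t = x k t" by simp
      qed
      also have "\<dots> = w t - ?e t" using fun_cong[OF xs, of t] by simp
      finally show "w t = (\<Sum>k\<in>\<sigma> ` {i..d}. ?x k t)" by simp
    qed
    ultimately show "w \<in> ssum (\<lambda>k. idem_op X th d k ` W 0) (\<sigma> ` {i..d})"
      unfolding ssum_def by blast
  qed
qed

lemma main: "i \<le> Suc d \<Longrightarrow> ssum (\<lambda>k. idem_op X th d k ` W 0) (\<sigma> ` {i..d}) = W i"
  using main_sub main_sup by blast

end

lemma tK_eq: "tK q i as t s = (if t = s \<and> length t = length as then prod_list (map (Kval q i) t) else 0)"
  by (induction q i as t s rule: tK.induct) auto

lemma tEp_cnt: "tEp q i as t s \<noteq> 0 \<Longrightarrow>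
   (if i = 1 then count_list t True + 1 = count_list s True else count_list t True = count_list s True + 1)"
  by (induction q i as t s rule: tEp.induct) (auto simp: ep1_def tK_eq split: if_splits)

lemma tEm_cnt: "tEm q i as t s \<noteq> 0 \<Longrightarrow>
   (if i = 1 then count_list t True = count_list s True + 1 else count_list t True + 1 = count_list s True)"
  by (induction q i as t s rule: tEm.induct) (auto simp: em1_def split: if_splits)

lemma fin_len: "finite {s::bool list. length s = n}"
  using finite_lists_length_eq[of "UNIV::bool set" n] by simp

lemma act_nz: "act n M w t \<noteq> 0 \<Longrightarrow> length t = n \<and> (\<exists>s. length s = n \<and> M t s \<noteq> 0 \<and> w s \<noteq> 0)"
proof -
  assume h: "act n M w t \<noteq> 0"
  then have l: "length t = n" unfolding act_def by (cases "length t = n") auto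
  then have "(\<Sum>s\<in>{s. length s = n}. M t s * w s) \<noteq> 0" using h unfolding act_def by simp
  then obtain s where "s \<in> {s. length s = n}" "M t s * w s \<noteq> 0"
    by (meson sum.not_neutral_contains_not_neutral)
  then show ?thesis using l by auto
qed

lemma act_lin: "act n M (\<lambda>t. \<alpha> * f t + \<beta> * h t) = (\<lambda>t. \<alpha> * act n M f t + \<beta> * act n M h t)"
  unfolding act_def
  by (auto simp: sum_distrib_left sum.distrib algebra_simps)

lemma K_op_eq: "K_op q i as w t = (if length t = length as then prod_list (map (Kval q i) t) * w t else 0)"
proof -
  have "(\<Sum>s\<in>{s. length s = length as}. tK q i as t s * w s)
      = (\<Sum>s\<in>{s. length s = length as}. if s = t then prod_list (map (Kval q i) t) * w t else 0)"
    by (rule sum.cong) (auto simp: tK_eq)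
  then show ?thesis unfolding K_op_def act_def using fin_len
    by (simp add: sum.delta')
qed

lemma kp0: "q \<noteq> 0 \<Longrightarrow> prod_list (map (Kval q 0) t) = q powi (2 * int (count_list t True) - int (length t))"
proof (induction t)
  case Nil then show ?case by simp
next
  case (Cons x t)
  let ?E = "2 * int (count_list t True) - int (length t)"
  let ?E' = "2 * int (count_list (x#t) True) - int (length (x#t))"
  show ?case
  proof (cases x)
    case True
    have e: "?E' = ?E + 1" using True by simp
    have "prod_list (map (Kval q 0) (x#t)) = q * prod_list (map (Kval q 0) t)" using True by (simp add: Kval_def)
    also have "\<dots> = q * q powi ?E" using Cons by simp
    also have "\<dots> = q powi (?E + 1)" by (rule power_int_add_1'[symmetric]) (simp add: Cons.prems)
    also have "\<dots> = q powi ?E'" by (simp only: e)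
    finally show ?thesis .
  next
    case False
    have e: "?E = ?E' + 1" using False by simp
    have "prod_list (map (Kval q 0) (x#t)) = inverse q * prod_list (map (Kval q 0) t)" using False by (simp add: Kval_def)
    also have "\<dots> = inverse q * q powi ?E" using Cons by simp
    also have "\<dots> = inverse q * q powi (?E' + 1)" by (simp only: e)
    also have "\<dots> = inverse q * (q * q powi ?E')" by (subst power_int_add_1') (simp_all add: Cons.prems)
    also have "\<dots> = q powi ?E'" using Cons.prems by simp
    finally show ?thesis .
  qed
qed

lemma kp1: "q \<noteq> 0 \<Longrightarrow> prod_list (map (Kval q 1) t) = q powi (int (length t) - 2 * int (count_list t True))"
proof (induction t)
  case Nil then show ?case by simp
next
  case (Cons x t)
  let ?E = "int (length t) - 2 * int (count_list t True)"
  let ?E' = "int (length (x#t)) - 2 * int (count_list (x#t) True)"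
  show ?case
  proof (cases x)
    case False
    have e: "?E' = ?E + 1" using False by simp
    have "prod_list (map (Kval q 1) (x#t)) = q * prod_list (map (Kval q 1) t)" using False by (simp add: Kval_def)
    also have "\<dots> = q * q powi ?E" using Cons by simp
    also have "\<dots> = q powi (?E + 1)" by (rule power_int_add_1'[symmetric]) (simp add: Cons.prems)
    also have "\<dots> = q powi ?E'" by (simp only: e)
    finally show ?thesis .
  next
    case True
    have e: "?E = ?E' + 1" using True by simp
    have "prod_list (map (Kval q 1) (x#t)) = inverse q * prod_list (map (Kval q 1) t)" using True by (simp add: Kval_def)
    also have "\<dots> = inverse q * q powi ?E" using Cons by simp
    also have "\<dots> = inverse q * q powi (?E' + 1)" by (simp only: e)
    also have "\<dots> = inverse q * (q * q powi ?E')" by (subst power_int_add_1') (simp_all add: Cons.prems)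
    also have "\<dots> = q powi ?E'" using Cons.prems by simp
    finally show ?thesis .
  qed
qed

definition Wup :: "nat \<Rightarrow> nat \<Rightarrow> (bool list \<Rightarrow> 'a::field) set" where
  "Wup d m = {w \<in> Vsp d. \<forall>s. w s \<noteq> 0 \<longrightarrow> m \<le> count_list s True}"
definition Wdn :: "nat \<Rightarrow> nat \<Rightarrow> (bool list \<Rightarrow> 'a::field) set" where
  "Wdn d m = {w \<in> Vsp d. \<forall>s. w s \<noteq> 0 \<longrightarrow> count_list s True + m \<le> d}"

lemma A_lin: "A_op q al a b c u v (\<lambda>t. \<alpha> * f t + \<beta> * h t)
   = (\<lambda>t. \<alpha> * A_op q al a b c u v f t + \<beta> * A_op q al a b c u v h t)"
  unfolding A_op_def K_op_def ep_op_def em_op_def act_lin by (rule ext) (simp add: algebra_simps)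

lemma As_lin: "As_op q al a b c u v (\<lambda>t. \<alpha> * f t + \<beta> * h t)
   = (\<lambda>t. \<alpha> * As_op q al a b c u v f t + \<beta> * As_op q al a b c u v h t)"
  unfolding As_op_def K_op_def ep_op_def em_op_def act_lin by (rule ext) (simp add: algebra_simps)

lemma keyA:
  assumes d: "d = length al" and q: "q \<noteq> 0" and w: "w \<in> Wup d m"
  shows "(\<lambda>t. A_op q al a b c u v w t - theta q d a b c m * w t) \<in> Wup d (Suc m)"
proof -
  have wV: "\<And>s. length s \<noteq> d \<Longrightarrow> w s = 0" and wc: "\<And>s. w s \<noteq> 0 \<Longrightarrow> m \<le> count_list s True"
    using w by (auto simp: Wup_def Vsp_def)
  have ep: "\<And>t. ep_op q 0 al w t \<noteq> 0 \<Longrightarrow> Suc m \<le> count_list t True"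
  proof -
    fix t assume "ep_op q 0 al w t \<noteq> 0"
    then obtain s where "tEp q 0 al t s \<noteq> 0" "w s \<noteq> 0" unfolding ep_op_def using act_nz by blast
    then show "Suc m \<le> count_list t True" using tEp_cnt[of q 0 al t s] wc[of s] by simp
  qed
  have em: "\<And>t. em_op q 1 al (K_op q 1 al w) t \<noteq> 0 \<Longrightarrow> Suc m \<le> count_list t True"
  proof -
    fix t assume "em_op q 1 al (K_op q 1 al w) t \<noteq> 0"
    then obtain s where "tEm q 1 al t s \<noteq> 0" "K_op q 1 al w s \<noteq> 0" unfolding em_op_def using act_nz by blast
    then have "tEm q 1 al t s \<noteq> 0" "w s \<noteq> 0" by (auto simp: K_op_eq split: if_splits)
    then show "Suc m \<le> count_list t True" using tEm_cnt[of q 1 al t s] wc[of s] by simp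
  qed
  have epl: "\<And>t. length t \<noteq> d \<Longrightarrow> ep_op q 0 al w t = 0" unfolding ep_op_def act_def d by simp
  have eml: "\<And>t. length t \<noteq> d \<Longrightarrow> em_op q 1 al (K_op q 1 al w) t = 0" unfolding em_op_def act_def d by simp
  show ?thesis unfolding Wup_def Vsp_def
  proof (intro CollectI conjI allI impI)
    fix t :: "bool list" assume lt: "length t \<noteq> d"
    show "A_op q al a b c u v w t - theta q d a b c m * w t = 0"
      using wV[OF lt] epl[OF lt] eml[OF lt] lt by (simp add: A_op_def K_op_eq d)
  next
    fix t :: "bool list" assume nz: "A_op q al a b c u v w t - theta q d a b c m * w t \<noteq> 0"
    show "Suc m \<le> count_list t True"
    proof (rule ccontr)
      assume ns: "\<not> Suc m \<le> count_list t True"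
      then have z: "ep_op q 0 al w t = 0" "em_op q 1 al (K_op q 1 al w) t = 0" using ep em by force+
      show False
      proof (cases "length t = d")
        case False
        then show False using nz wV[OF False] epl[OF False] eml[OF False] by (simp add: A_op_def K_op_eq d)
      next
        case lt: True
        show False
        proof (cases "w t = 0")
          case True
          then show False using nz z lt by (simp add: A_op_def K_op_eq d)
        next
          case False
          then have cm: "count_list t True = m" using wc[OF False] ns by simp
          have "A_op q al a b c u v w t = (a + b * q powi (2 * int (count_list t True) - int (length t))
                 + c * q powi (int (length t) - 2 * int (count_list t True))) * w t"
            using z lt by (simp add: A_op_def K_op_eq d kp0[OF q] kp1[OF q] kp1[OF q, simplified] algebra_simps)
          then show False using nz cm lt by (simp add: theta_def)
        qed
      qed
    qed
  qed
qed

lemma keyAs: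
  assumes d: "d = length al" and q: "q \<noteq> 0" and w: "w \<in> Wdn d m" and md: "m \<le> d"
  shows "(\<lambda>t. As_op q al a b c u v w t - theta q d a b c (d - m) * w t) \<in> Wdn d (Suc m)"
proof -
  have wV: "\<And>s. length s \<noteq> d \<Longrightarrow> w s = 0" and wc: "\<And>s. w s \<noteq> 0 \<Longrightarrow> count_list s True + m \<le> d"
    using w by (auto simp: Wdn_def Vsp_def)
  have ep: "\<And>t. ep_op q 1 al w t \<noteq> 0 \<Longrightarrow> count_list t True + Suc m \<le> d"
  proof -
    fix t assume "ep_op q 1 al w t \<noteq> 0"
    then obtain s where "tEp q 1 al t s \<noteq> 0" "w s \<noteq> 0" unfolding ep_op_def using act_nz by blast
    then show "count_list t True + Suc m \<le> d" using tEp_cnt[of q 1 al t s] wc[of s] by simp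
  qed
  have em: "\<And>t. em_op q 0 al (K_op q 0 al w) t \<noteq> 0 \<Longrightarrow> count_list t True + Suc m \<le> d"
  proof -
    fix t assume "em_op q 0 al (K_op q 0 al w) t \<noteq> 0"
    then obtain s where "tEm q 0 al t s \<noteq> 0" "K_op q 0 al w s \<noteq> 0" unfolding em_op_def using act_nz by blast
    then have "tEm q 0 al t s \<noteq> 0" "w s \<noteq> 0" by (auto simp: K_op_eq split: if_splits)
    then show "count_list t True + Suc m \<le> d" using tEm_cnt[of q 0 al t s] wc[of s] by simp
  qed
  have epl: "\<And>t. length t \<noteq> d \<Longrightarrow> ep_op q 1 al w t = 0" unfolding ep_op_def act_def d by simp
  have eml: "\<And>t. length t \<noteq> d \<Longrightarrow> em_op q 0 al (K_op q 0 al w) t = 0" unfolding em_op_def act_def d by simp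
  show ?thesis unfolding Wdn_def Vsp_def
  proof (intro CollectI conjI allI impI)
    fix t :: "bool list" assume lt: "length t \<noteq> d"
    show "As_op q al a b c u v w t - theta q d a b c (d - m) * w t = 0"
      using wV[OF lt] epl[OF lt] eml[OF lt] lt by (simp add: As_op_def K_op_eq d)
  next
    fix t :: "bool list" assume nz: "As_op q al a b c u v w t - theta q d a b c (d - m) * w t \<noteq> 0"
    show "count_list t True + Suc m \<le> d"
    proof (rule ccontr)
      assume ns: "\<not> count_list t True + Suc m \<le> d"
      then have z: "ep_op q 1 al w t = 0" "em_op q 0 al (K_op q 0 al w) t = 0" using ep em by force+
      show False
      proof (cases "length t = d")
        case False
        then show False using nz wV[OF False] epl[OF False] eml[OF False] by (simp add: As_op_def K_op_eq d)
      next
        case lt: True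
        show False
        proof (cases "w t = 0")
          case True
          then show False using nz z lt by (simp add: As_op_def K_op_eq d)
        next
          case False
          then have cm: "count_list t True = d - m" using wc[OF False] ns by simp
          have "As_op q al a b c u v w t = (a + b * q powi (2 * int (count_list t True) - int (length t))
                 + c * q powi (int (length t) - 2 * int (count_list t True))) * w t"
            using z lt by (simp add: As_op_def K_op_eq d kp0[OF q] kp1[OF q] kp1[OF q, simplified] algebra_simps)
          then show False using nz cm lt by (simp add: theta_def)
        qed
      qed
    qed
  qed
qed

lemma Usp_sum:
  assumes "finite I"
  shows "ssum (Usp d) I = {w \<in> Vsp d. \<forall>s. w s \<noteq> 0 \<longrightarrow> count_list s True \<in> I}"
proof
  show "ssum (Usp d) I \<subseteq> {w \<in> Vsp d. \<forall>s. w s \<noteq> 0 \<longrightarrow> count_list s True \<in> I}"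
  proof
    fix z assume "z \<in> ssum (Usp d) I"
    then obtain x where z: "z = (\<lambda>t. \<Sum>k\<in>I. x k t)" and x: "\<forall>k\<in>I. x k \<in> Usp d k"
      unfolding ssum_def by blast
    have "z \<in> Vsp d" unfolding Vsp_def z using x by (auto simp: Usp_def Vsp_def)
    moreover have "\<forall>s. z s \<noteq> 0 \<longrightarrow> count_list s True \<in> I"
    proof (intro allI impI)
      fix s assume "z s \<noteq> 0"
      then obtain k where "k \<in> I" "x k s \<noteq> 0" unfolding z
        by (meson sum.not_neutral_contains_not_neutral)
      then show "count_list s True \<in> I" using x by (auto simp: Usp_def)
    qed
    ultimately show "z \<in> {w \<in> Vsp d. \<forall>s. w s \<noteq> 0 \<longrightarrow> count_list s True \<in> I}" by blast
  qed
next
  show "{w \<in> Vsp d. \<forall>s. w s \<noteq> 0 \<longrightarrow> count_list s True \<in> I} \<subseteq> ssum (Usp d) I"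
  proof
    fix w assume w: "w \<in> {w \<in> Vsp d. \<forall>s. w s \<noteq> 0 \<longrightarrow> count_list s True \<in> I}"
    let ?x = "\<lambda>k t. if count_list t True = k then w t else 0"
    have "\<forall>k\<in>I. ?x k \<in> Usp d k" using w by (auto simp: Usp_def Vsp_def)
    moreover have "w = (\<lambda>t. \<Sum>k\<in>I. ?x k t)"
    proof
      fix t
      have "(\<Sum>k\<in>I. ?x k t) = (if count_list t True \<in> I then w t else 0)"
        using assms by (simp add: sum.delta)
      then show "w t = (\<Sum>k\<in>I. ?x k t)" using w by auto
    qed
    ultimately have h: "w = (\<lambda>t. \<Sum>k\<in>I. ?x k t) \<and> (\<forall>k\<in>I. ?x k \<in> Usp d k)" by blast
    show "w \<in> ssum (Usp d) I" unfolding ssum_def by (rule CollectI, rule exI[of _ "?x"], rule h)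
  qed
qed


lemma Wup_sub: "f \<in> Wup d m \<Longrightarrow> h \<in> Wup d m \<Longrightarrow> (\<lambda>t. \<alpha> * f t + \<beta> * h t) \<in> Wup d m"
  unfolding Wup_def Vsp_def by (auto, metis add.right_neutral mult_zero_right)
lemma Wdn_sub: "f \<in> Wdn d m \<Longrightarrow> h \<in> Wdn d m \<Longrightarrow> (\<lambda>t. \<alpha> * f t + \<beta> * h t) \<in> Wdn d m"
  unfolding Wdn_def Vsp_def by (auto, metis add.right_neutral mult_zero_right)
lemma Wup_zero: "(\<lambda>t. 0) \<in> Wup d m" by (simp add: Wup_def Vsp_def)
lemma Wdn_zero: "(\<lambda>t. 0) \<in> Wdn d m" by (simp add: Wdn_def Vsp_def)
lemma Wup_anti: "m \<le> m' \<Longrightarrow> Wup d m' \<subseteq> Wup d m" by (auto simp: Wup_def)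
lemma Wdn_anti: "m \<le> m' \<Longrightarrow> Wdn d m' \<subseteq> Wdn d m" by (fastforce simp: Wdn_def)
lemma Wup_top: "Wup d (Suc d) \<subseteq> {\<lambda>t. 0}"
proof
  fix w :: "bool list \<Rightarrow> 'a" assume w: "w \<in> Wup d (Suc d)"
  have "w s = 0" for s
  proof (rule ccontr)
    assume "w s \<noteq> 0"
    then have "length s = d" "Suc d \<le> count_list s True" using w by (auto simp: Wup_def Vsp_def)
    then show False using count_le_length[of s True] by simp
  qed
  then show "w \<in> {\<lambda>t. 0}" by auto
qed
lemma Wdn_top: "Wdn d (Suc d) \<subseteq> {\<lambda>t. 0}"
  by (auto simp: Wdn_def)
lemma Vsp_cnt: "w \<in> Vsp d \<Longrightarrow> w s \<noteq> 0 \<Longrightarrow> count_list s True \<le> d"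
  using count_le_length[of s True] by (auto simp: Vsp_def)
lemma Wup0: "Wup d 0 = Vsp d" by (auto simp: Wup_def)
lemma Wdn0: "Wdn d 0 = Vsp d" using Vsp_cnt by (auto simp: Wdn_def)

theorem lemma9p7:
  fixes q a b c as bs cs u v us vs :: "'a::field" and alphas :: "'a list" and d i :: nat
  assumes "alg_closed TYPE('a)"
    and "d = length alphas"
    and "q \<noteq> 0" "b \<noteq> 0" "c \<noteq> 0" "bs \<noteq> 0" "cs \<noteq> 0"
    and "q^2 \<noteq> 1" "q^2 \<noteq> -1"
    and "inj_on (theta q d a b c) {0..d}"
    and "inj_on (theta q d as bs cs) {0..d}"
    and "\<forall>al\<in>set alphas. al \<noteq> 0"
    and "u * vs = - b * bs * inverse q * (q - inverse q)^2"
    and "v * us = - c * cs * inverse q * (q - inverse q)^2"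
    and "i \<le> d"
  shows "ssum (\<lambda>k. idem_op (A_op q alphas a b c u v) (theta q d a b c) d k ` Vsp d) {i..d}
           = ssum (Usp d) {i..d}
         \<and> ssum (\<lambda>k. idem_op (As_op q alphas as bs cs us vs) (theta q d as bs cs) d k ` Vsp d) {0..i}
           = ssum (Usp d) {0..i}"
proof
  have dl: "d = length alphas" and q: "q \<noteq> 0" and id: "i \<le> d" using assms by auto
  have k1: "\<And>m w. m \<le> d \<Longrightarrow> w \<in> Wup d m \<Longrightarrow>
     (\<lambda>t. A_op q alphas a b c u v w t - theta q d a b c (id m) * w t) \<in> Wup d (Suc m)"
    using keyA[OF dl q] by simp
  have F1: "flagsys (A_op q alphas a b c u v) (theta q d a b c) d (Wup d) id"
    by (rule flagsys.intro[OF A_lin Wup_sub Wup_zero Wup_anti Wup_top k1 bij_betw_id assms(10)])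
  have "ssum (\<lambda>k. idem_op (A_op q alphas a b c u v) (theta q d a b c) d k ` Wup d 0) {i..d} = Wup d i"
    using flagsys.main[OF F1, of i] id by simp
  moreover have "ssum (Usp d) {i..d} = Wup d i"
    unfolding Usp_sum[OF finite_atLeastAtMost] using Vsp_cnt by (auto simp: Wup_def)
  ultimately show "ssum (\<lambda>k. idem_op (A_op q alphas a b c u v) (theta q d a b c) d k ` Vsp d) {i..d}
           = ssum (Usp d) {i..d}" by (metis Wup0)
next
  have dl: "d = length alphas" and q: "q \<noteq> 0" and id: "i \<le> d" using assms by auto
  have k2: "\<And>m w. m \<le> d \<Longrightarrow> w \<in> Wdn d m \<Longrightarrow>
     (\<lambda>t. As_op q alphas as bs cs us vs w t - theta q d as bs cs ((\<lambda>m. d - m) m) * w t) \<in> Wdn d (Suc m)"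
    using keyAs[OF dl q] by simp
  have bj: "bij_betw (\<lambda>m. d - m) {0..d} {0..d}"
    unfolding bij_betw_def
  proof
    show "inj_on (\<lambda>m. d - m) {0..d}" by (auto simp: inj_on_def)
    show "(\<lambda>m. d - m) ` {0..d} = {0..d}"
    proof
      show "(\<lambda>m. d - m) ` {0..d} \<subseteq> {0..d}" by auto
      show "{0..d} \<subseteq> (\<lambda>m. d - m) ` {0..d}"
      proof
        fix x assume "x \<in> {0..d}"
        then have "d - x \<in> {0..d}" "x = d - (d - x)" by auto
        then show "x \<in> (\<lambda>m. d - m) ` {0..d}" by blast
      qed
    qed
  qed
  have F2: "flagsys (As_op q alphas as bs cs us vs) (theta q d as bs cs) d (Wdn d) (\<lambda>m. d - m)"
    by (rule flagsys.intro[OF As_lin Wdn_sub Wdn_zero Wdn_anti Wdn_top k2 bj assms(11)])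
  have img: "(\<lambda>m. d - m) ` {d - i..d} = {0..i}"
  proof
    show "(\<lambda>m. d - m) ` {d - i..d} \<subseteq> {0..i}" using id by auto
    show "{0..i} \<subseteq> (\<lambda>m. d - m) ` {d - i..d}"
    proof
      fix x assume "x \<in> {0..i}"
      then have "d - x \<in> {d - i..d}" "x = d - (d - x)" using id by auto
      then show "x \<in> (\<lambda>m. d - m) ` {d - i..d}" by blast
    qed
  qed
  have "ssum (\<lambda>k. idem_op (As_op q alphas as bs cs us vs) (theta q d as bs cs) d k ` Wdn d 0) {0..i} = Wdn d (d - i)"
    using flagsys.main[OF F2, of "d - i"] img by simp
  moreover have "ssum (Usp d) {0..i} = Wdn d (d - i)"
    unfolding Usp_sum[OF finite_atLeastAtMost] using Vsp_cnt id by (auto simp: Wdn_def)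
  ultimately show "ssum (\<lambda>k. idem_op (As_op q alphas as bs cs us vs) (theta q d as bs cs) d k ` Vsp d) {0..i}
           = ssum (Usp d) {0..i}" by (metis Wdn0)
qed


end
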